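(* Let $T>0$, let $H:\mathbb{R}^n\times\mathbb{R}^n\to\mathbb{R}$ satisfy: $p\mapsto H(x,p)$ convex for every $x$, and for some $M\geqslant0$, $|H(x,p)-H(x,q)|\leqslant M(1+|x|)|p-q|$ and $|H(x,p)-H(y,p)|\leqslant M(1+|p|)|x-y|$ for all $x,y,p,q\in\mathbb{R}^n$. Let $g_0,g_T\in C(\mathbb{R}^n,\mathbb{R})$, let $L(x,v)=\sup_{p\in\mathbb{R}^n}\{\langle v,p\rangle-H(x,p)\}$, and define $U(t_0,x_0)=\inf\{g_0(x(0))+\int_0^{t_0}L(x(s),\dot x(s))\,ds \mid x\in\mathcal{A}([0,t_0],\mathbb{R}^n),\ x(t_0)=x_0\}$, $W(t_0,x_0)=\sup\{g_T(x(T))-\int_{t_0}^{T}L(x(s),\dot x(s))\,ds \mid x\in\mathcal{A}([t_0,T],\mathbb{R}^n),\ x(t_0)=x_0\}$. If $\bar x\in\mathcal{A}([0,T],\mathbb{R}^n)$ is a maximal optimal trajectory in the Bolza problem and $U(T,\cdot)=W(T,\cdot)$, then $\bar x$ is a maximal optimal trajectory in the inverse Bolza problem and $U(t,\bar x(t))=W(t,\bar x(t))$ for all $t\in[0,T]$.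
   Context: $\mathcal{A}([a,b],\mathbb{R}^n)$ denotes the absolutely continuous functions $[a,b]\to\mathbb{R}^n$. An $\bar x\in\mathcal{A}([0,T],\mathbb{R}^n)$ is a maximal optimal trajectory in the Bolza problem if $U(T,\bar x(T))=U(0,\bar x(0))+\int_0^T L(\bar x(s),\dot{\bar x}(s))\,ds$; an $\tilde x\in\mathcal{A}([0,T],\mathbb{R}^n)$ is a maximal optimal trajectory in the inverse Bolza problem if $W(0,\tilde x(0))=W(T,\tilde x(T))-\int_0^T L(\tilde x(s),\dot{\tilde x}(s))\,ds$. *)

theory Defs
  imports "HOL-Analysis.Analysis"
begin

definition abs_cont_on :: "real \<Rightarrow> real \<Rightarrow> (real \<Rightarrow> 'a::real_normed_vector) \<Rightarrow> bool" where
  "abs_cont_on a b f \<longleftrightarrow>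
     (\<forall>e>0. \<exists>d>0. \<forall>I::(real \<times> real) set.
        finite I \<and> (\<forall>(u,v)\<in>I. a \<le> u \<and> u \<le> v \<and> v \<le> b)
        \<and> pairwise (\<lambda>(u,v) (u',v'). v \<le> u' \<or> v' \<le> u) I
        \<and> (\<Sum>(u,v)\<in>I. v - u) < d
        \<longrightarrow> (\<Sum>(u,v)\<in>I. norm (f v - f u)) < e)"

definition lagr :: "('a::euclidean_space \<Rightarrow> 'a \<Rightarrow> real) \<Rightarrow> 'a \<Rightarrow> 'a \<Rightarrow> ereal" where
  "lagr H x v = (SUP p. ereal (inner v p - H x p))"

definition eintegral :: "real \<Rightarrow> real \<Rightarrow> (real \<Rightarrow> ereal) \<Rightarrow> ereal" where
  "eintegral a b f =
     enn2ereal (\<integral>\<^sup>+ s\<in>{a..b}. e2ennreal (f s) \<partial>lebesgue)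
   - enn2ereal (\<integral>\<^sup>+ s\<in>{a..b}. e2ennreal (- f s) \<partial>lebesgue)"

definition action :: "('a::euclidean_space \<Rightarrow> 'a \<Rightarrow> real) \<Rightarrow> real \<Rightarrow> real \<Rightarrow> (real \<Rightarrow> 'a) \<Rightarrow> ereal" where
  "action H a b x = eintegral a b (\<lambda>s. lagr H (x s) (vector_derivative x (at s)))"

definition valU :: "('a::euclidean_space \<Rightarrow> 'a \<Rightarrow> real) \<Rightarrow> ('a \<Rightarrow> real) \<Rightarrow> real \<Rightarrow> 'a \<Rightarrow> ereal" where
  "valU H g0 t0 x0 = (INF x\<in>{x. abs_cont_on 0 t0 x \<and> x t0 = x0}. ereal (g0 (x 0)) + action H 0 t0 x)"

definition valW :: "('a::euclidean_space \<Rightarrow> 'a \<Rightarrow> real) \<Rightarrow> ('a \<Rightarrow> real) \<Rightarrow> real \<Rightarrow> real \<Rightarrow> 'a \<Rightarrow> ereal" where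
  "valW H gT T t0 x0 = (SUP x\<in>{x. abs_cont_on t0 T x \<and> x t0 = x0}. ereal (gT (x T)) - action H t0 T x)"

end

theory Submission
  imports Defs
begin


lemma nn_integral_inner_add:
  assumes A: "A \<in> sets M" and B: "B \<in> sets M" and disj: "A \<inter> B = {}"
  shows "(\<integral>\<^sup>+x. f x * indicator (A \<union> B) x \<partial>M) = (\<integral>\<^sup>+x. f x * indicator A x \<partial>M) + (\<integral>\<^sup>+x. f x * indicator B x \<partial>M)"
proof (rule antisym)
  show "(\<integral>\<^sup>+x. f x * indicator (A \<union> B) x \<partial>M) \<le> (\<integral>\<^sup>+x. f x * indicator A x \<partial>M) + (\<integral>\<^sup>+x. f x * indicator B x \<partial>M)"
    unfolding nn_integral_def[of M "\<lambda>x. f x * indicator (A \<union> B) x"]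
  proof (rule SUP_least, safe)
    fix g assume g: "simple_function M g" "g \<le> (\<lambda>x. f x * indicator (A \<union> B) x)"
    have geq: "g = (\<lambda>x. g x * indicator A x + g x * indicator B x)"
    proof
      fix x
      have "g x \<le> f x * indicator (A \<union> B) x" using g(2) by (auto simp: le_fun_def)
      then show "g x = g x * indicator A x + g x * indicator B x"
        using disj by (auto simp: indicator_def split: if_splits)
    qed
    have sA: "simple_function M (\<lambda>x. g x * indicator A x)"
      using g(1) A by (intro simple_function_mult simple_function_indicator) auto
    have sB: "simple_function M (\<lambda>x. g x * indicator B x)"
      using g(1) B by (intro simple_function_mult simple_function_indicator) auto
    have "integral\<^sup>S M g = integral\<^sup>S M (\<lambda>x. g x * indicator A x) + integral\<^sup>S M (\<lambda>x. g x * indicator B x)"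
      by (subst geq, rule simple_integral_add[OF sA _ sB]) auto
    also have "\<dots> = (\<integral>\<^sup>+x. g x * indicator A x \<partial>M) + (\<integral>\<^sup>+x. g x * indicator B x \<partial>M)"
      using nn_integral_eq_simple_integral[OF sA] nn_integral_eq_simple_integral[OF sB] by simp
    also have "\<dots> \<le> (\<integral>\<^sup>+x. f x * indicator A x \<partial>M) + (\<integral>\<^sup>+x. f x * indicator B x \<partial>M)"
    proof (intro add_mono nn_integral_mono)
      fix x
      have "g x \<le> f x * indicator (A \<union> B) x" using g(2) by (auto simp: le_fun_def)
      then show "g x * indicator A x \<le> f x * indicator A x" "g x * indicator B x \<le> f x * indicator B x"
        by (auto simp: indicator_def)
    qed
    finally show "integral\<^sup>S M g \<le> (\<integral>\<^sup>+x. f x * indicator A x \<partial>M) + (\<integral>\<^sup>+x. f x * indicator B x \<partial>M)" .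
  qed
next
  let ?G1 = "{g. simple_function M g \<and> g \<le> (\<lambda>x. f x * indicator A x)}"
  let ?G2 = "{g. simple_function M g \<and> g \<le> (\<lambda>x. f x * indicator B x)}"
  have "(\<lambda>_. 0) \<in> ?G1" by (auto simp: le_fun_def)
  then have n1: "?G1 \<noteq> {}" by blast
  have "(\<lambda>_. 0) \<in> ?G2" by (auto simp: le_fun_def)
  then have n2: "?G2 \<noteq> {}" by blast
  have "(\<integral>\<^sup>+x. f x * indicator A x \<partial>M) + (\<integral>\<^sup>+x. f x * indicator B x \<partial>M)
      = (SUP g1\<in>?G1. SUP g2\<in>?G2. integral\<^sup>S M g1 + integral\<^sup>S M g2)"
    unfolding nn_integral_def
    by (simp add: ennreal_SUP_add_left[OF n1, symmetric] ennreal_SUP_add_right[OF n2, symmetric])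
  also have "\<dots> \<le> (\<integral>\<^sup>+x. f x * indicator (A \<union> B) x \<partial>M)"
  proof (intro SUP_least, safe)
    fix g1 g2 assume g1: "simple_function M g1" "g1 \<le> (\<lambda>x. f x * indicator A x)"
      and g2: "simple_function M g2" "g2 \<le> (\<lambda>x. f x * indicator B x)"
    have "integral\<^sup>S M g1 + integral\<^sup>S M g2 = integral\<^sup>S M (\<lambda>x. g1 x + g2 x)"
      by (rule simple_integral_add[OF g1(1) _ g2(1), symmetric]) auto
    also have "\<dots> = (\<integral>\<^sup>+x. g1 x + g2 x \<partial>M)"
      using nn_integral_eq_simple_integral[of M "\<lambda>x. g1 x + g2 x"] g1 g2 by auto
    also have "\<dots> \<le> (\<integral>\<^sup>+x. f x * indicator (A \<union> B) x \<partial>M)"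
    proof (rule nn_integral_mono)
      fix x
      have "g1 x \<le> f x * indicator A x" "g2 x \<le> f x * indicator B x" using g1 g2 by (auto simp: le_fun_def)
      then show "g1 x + g2 x \<le> f x * indicator (A \<union> B) x"
        using disj by (cases "x \<in> A"; cases "x \<in> B") (auto simp: indicator_def)
    qed
    finally show "integral\<^sup>S M g1 + integral\<^sup>S M g2 \<le> (\<integral>\<^sup>+x. f x * indicator (A \<union> B) x \<partial>M)" .
  qed
  finally show "(\<integral>\<^sup>+x. f x * indicator A x \<partial>M) + (\<integral>\<^sup>+x. f x * indicator B x \<partial>M) \<le> (\<integral>\<^sup>+x. f x * indicator (A \<union> B) x \<partial>M)" .
qed

lemma set_nn_split:
  fixes f :: "real \<Rightarrow> ennreal"
  assumes "a \<le> t" "t \<le> b"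
  shows "(\<integral>\<^sup>+ s\<in>{a..b}. f s \<partial>lebesgue) = (\<integral>\<^sup>+ s\<in>{a..t}. f s \<partial>lebesgue) + (\<integral>\<^sup>+ s\<in>{t..b}. f s \<partial>lebesgue)"
proof -
  have "{a..b} = {a..<t} \<union> {t..b}" using assms by auto
  then have "(\<integral>\<^sup>+ s\<in>{a..b}. f s \<partial>lebesgue) = (\<integral>\<^sup>+ s\<in>{a..<t}. f s \<partial>lebesgue) + (\<integral>\<^sup>+ s\<in>{t..b}. f s \<partial>lebesgue)"
    by (simp only:) (rule nn_integral_inner_add, auto)
  moreover have "(\<integral>\<^sup>+ s\<in>{a..<t}. f s \<partial>lebesgue) = (\<integral>\<^sup>+ s\<in>{a..t}. f s \<partial>lebesgue)"
    by (intro nn_integral_cong_AE eventually_mono[OF AE_completion[OF AE_lborel_singleton[of t]]])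
      (auto simp: indicator_def)
  ultimately show ?thesis by simp
qed

lemma eintegral_same: "eintegral a a f = 0"
proof -
  have "(\<integral>\<^sup>+ s\<in>{a..a}. g s \<partial>lebesgue) = 0" for g :: "real \<Rightarrow> ennreal"
  proof -
    have "(\<integral>\<^sup>+ s\<in>{a..a}. g s \<partial>lebesgue) = (\<integral>\<^sup>+ (s::real). 0 \<partial>lebesgue)"
      by (intro nn_integral_cong_AE eventually_mono[OF AE_completion[OF AE_lborel_singleton[of a]]])
        (auto simp: indicator_def)
    then show ?thesis by simp
  qed
  then show ?thesis unfolding eintegral_def by simp
qed

lemma eintegral_cong:
  assumes "\<And>s. a < s \<Longrightarrow> s < b \<Longrightarrow> f s = g s"
  shows "eintegral a b f = eintegral a b g"
proof -
  have ae: "AE s in lebesgue. s \<noteq> a \<and> s \<noteq> (b::real)"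
    using AE_completion[OF AE_lborel_singleton[of a]] AE_completion[OF AE_lborel_singleton[of b]]
    by eventually_elim auto
  have "(\<integral>\<^sup>+ s\<in>{a..b}. e2ennreal (f s) \<partial>lebesgue) = (\<integral>\<^sup>+ s\<in>{a..b}. e2ennreal (g s) \<partial>lebesgue)"
    by (intro nn_integral_cong_AE eventually_mono[OF ae]) (auto simp: indicator_def assms)
  moreover have "(\<integral>\<^sup>+ s\<in>{a..b}. e2ennreal (- f s) \<partial>lebesgue) = (\<integral>\<^sup>+ s\<in>{a..b}. e2ennreal (- g s) \<partial>lebesgue)"
    by (intro nn_integral_cong_AE eventually_mono[OF ae]) (auto simp: indicator_def assms)
  ultimately show ?thesis unfolding eintegral_def by simp
qed

lemma eintegral_split:
  fixes f :: "real \<Rightarrow> ereal"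
  assumes "a \<le> t" "t \<le> b"
    and fin: "(\<integral>\<^sup>+ s\<in>{a..b}. e2ennreal (- f s) \<partial>lebesgue) \<noteq> top"
  shows "eintegral a b f = eintegral a t f + eintegral t b f"
    and "eintegral a b f \<noteq> -\<infinity>"
proof -
  define P1 where "P1 = (\<integral>\<^sup>+ s\<in>{a..t}. e2ennreal (f s) \<partial>lebesgue)"
  define P2 where "P2 = (\<integral>\<^sup>+ s\<in>{t..b}. e2ennreal (f s) \<partial>lebesgue)"
  define N1 where "N1 = (\<integral>\<^sup>+ s\<in>{a..t}. e2ennreal (- f s) \<partial>lebesgue)"
  define N2 where "N2 = (\<integral>\<^sup>+ s\<in>{t..b}. e2ennreal (- f s) \<partial>lebesgue)"
  have P: "(\<integral>\<^sup>+ s\<in>{a..b}. e2ennreal (f s) \<partial>lebesgue) = P1 + P2"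
    unfolding P1_def P2_def by (rule set_nn_split[OF assms(1,2)])
  have N: "(\<integral>\<^sup>+ s\<in>{a..b}. e2ennreal (- f s) \<partial>lebesgue) = N1 + N2"
    unfolding N1_def N2_def by (rule set_nn_split[OF assms(1,2)])
  have N1f: "N1 \<noteq> top" and N2f: "N2 \<noteq> top" using fin unfolding N by auto
  obtain n1 where n1: "enn2ereal N1 = ereal n1" using N1f
    by (metis enn2ereal_top enn2ereal_inject ereal_cases enn2ereal_nonneg not_MInfty_nonneg)
  obtain n2 where n2: "enn2ereal N2 = ereal n2" using N2f
    by (metis enn2ereal_top enn2ereal_inject ereal_cases enn2ereal_nonneg not_MInfty_nonneg)
  have p1: "enn2ereal P1 \<noteq> -\<infinity>" "enn2ereal P2 \<noteq> -\<infinity>"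
    using enn2ereal_nonneg[of P1] enn2ereal_nonneg[of P2] by auto
  have e1: "eintegral a t f = enn2ereal P1 - ereal n1"
    unfolding eintegral_def P1_def[symmetric] N1_def[symmetric] n1 ..
  have e2: "eintegral t b f = enn2ereal P2 - ereal n2"
    unfolding eintegral_def P2_def[symmetric] N2_def[symmetric] n2 ..
  have e: "eintegral a b f = (enn2ereal P1 + enn2ereal P2) - (ereal n1 + ereal n2)"
    unfolding eintegral_def P N plus_ennreal.rep_eq n1 n2 ..
  show "eintegral a b f = eintegral a t f + eintegral t b f"
    unfolding e e1 e2 using p1
    by (cases "enn2ereal P1"; cases "enn2ereal P2") auto
  show "eintegral a b f \<noteq> -\<infinity>"
    unfolding e using p1
    by (cases "enn2ereal P1"; cases "enn2ereal P2") auto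
qed



lemma ac_continuous:
  assumes "abs_cont_on a b x"
  shows "continuous_on {a..b} x"
  unfolding continuous_on_iff
proof (intro ballI allI impI)
  fix s e assume s: "s \<in> {a..b}" and e: "(0::real) < e"
  obtain d where d: "d > 0" and H: "\<And>I::(real\<times>real) set. finite I \<and> (\<forall>(u,v)\<in>I. a \<le> u \<and> u \<le> v \<and> v \<le> b)
        \<and> pairwise (\<lambda>(u,v) (u',v'). v \<le> u' \<or> v' \<le> u) I
        \<and> (\<Sum>(u,v)\<in>I. v - u) < d
        \<Longrightarrow> (\<Sum>(u,v)\<in>I. norm (x v - x u)) < e"
    using assms e unfolding abs_cont_on_def by meson
  show "\<exists>d>0. \<forall>s'\<in>{a..b}. dist s' s < d \<longrightarrow> dist (x s') (x s) < e"
  proof (intro exI[of _ d] conjI ballI impI d)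
    fix s' assume s': "s' \<in> {a..b}" and ds: "dist s' s < d"
    have "(\<Sum>(u,v)\<in>{(min s s', max s s')}. norm (x v - x u)) < e"
      using s s' ds by (intro H) (auto simp: dist_real_def pairwise_def)
    then show "dist (x s') (x s) < e"
      by (cases "s \<le> s'") (auto simp: dist_norm norm_minus_commute min_def max_def)
  qed
qed

lemma ac_restrict:
  assumes "abs_cont_on a b x" "a \<le> c" "d \<le> b"
  shows "abs_cont_on c d x"
  unfolding abs_cont_on_def
proof (intro allI impI)
  fix e :: real assume e: "e > 0"
  then obtain \<delta> where \<delta>: "\<delta> > 0" and H: "\<And>I::(real\<times>real) set. finite I \<and> (\<forall>(u,v)\<in>I. a \<le> u \<and> u \<le> v \<and> v \<le> b)
        \<and> pairwise (\<lambda>(u,v) (u',v'). v \<le> u' \<or> v' \<le> u) I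
        \<and> (\<Sum>(u,v)\<in>I. v - u) < \<delta>
        \<Longrightarrow> (\<Sum>(u,v)\<in>I. norm (x v - x u)) < e"
    using assms(1) unfolding abs_cont_on_def by meson
  show "\<exists>\<delta>>0. \<forall>I::(real\<times>real) set. finite I \<and> (\<forall>(u,v)\<in>I. c \<le> u \<and> u \<le> v \<and> v \<le> d)
        \<and> pairwise (\<lambda>(u,v) (u',v'). v \<le> u' \<or> v' \<le> u) I
        \<and> (\<Sum>(u,v)\<in>I. v - u) < \<delta>
        \<longrightarrow> (\<Sum>(u,v)\<in>I. norm (x v - x u)) < e"
  proof (intro exI[of _ \<delta>] conjI allI impI \<delta>)
    fix I :: "(real\<times>real) set"
    assume I: "finite I \<and> (\<forall>(u,v)\<in>I. c \<le> u \<and> u \<le> v \<and> v \<le> d)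
        \<and> pairwise (\<lambda>(u,v) (u',v'). v \<le> u' \<or> v' \<le> u) I
        \<and> (\<Sum>(u,v)\<in>I. v - u) < \<delta>"
    show "(\<Sum>(u,v)\<in>I. norm (x v - x u)) < e"
      using I assms(2,3) by (intro H) fastforce
  qed
qed

lemma ac_const: "abs_cont_on a b (\<lambda>_. y)"
  unfolding abs_cont_on_def by (auto intro: exI[of _ 1])



lemma ac_compose_mono:
  assumes ac: "abs_cont_on c d x"
    and mono: "\<And>u v. u \<le> v \<Longrightarrow> \<phi> u \<le> \<phi> v"
    and lip: "\<And>u v. u \<le> v \<Longrightarrow> \<phi> v - \<phi> u \<le> v - u"
    and rng: "\<And>s. a \<le> s \<Longrightarrow> s \<le> b \<Longrightarrow> c \<le> \<phi> s \<and> \<phi> s \<le> d"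
    and e: "e > 0"
  obtains \<delta> where "\<delta> > 0" "\<And>I::(real\<times>real) set. finite I \<Longrightarrow> (\<forall>(u,v)\<in>I. a \<le> u \<and> u \<le> v \<and> v \<le> b) \<Longrightarrow>
     pairwise (\<lambda>(u,v) (u',v'). v \<le> u' \<or> v' \<le> u) I \<Longrightarrow> (\<Sum>(u,v)\<in>I. v - u) < \<delta> \<Longrightarrow>
     (\<Sum>(u,v)\<in>I. norm (x (\<phi> v) - x (\<phi> u))) < e"
proof -
  obtain \<delta> where \<delta>: "\<delta> > 0" and H: "\<And>I::(real\<times>real) set. finite I \<and> (\<forall>(u,v)\<in>I. c \<le> u \<and> u \<le> v \<and> v \<le> d)
        \<and> pairwise (\<lambda>(u,v) (u',v'). v \<le> u' \<or> v' \<le> u) I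
        \<and> (\<Sum>(u,v)\<in>I. v - u) < \<delta>
        \<Longrightarrow> (\<Sum>(u,v)\<in>I. norm (x v - x u)) < e"
    using ac e unfolding abs_cont_on_def by meson
  show ?thesis
  proof (rule that[OF \<delta>])
    fix I :: "(real\<times>real) set"
    assume fin: "finite I" and rI: "\<forall>(u,v)\<in>I. a \<le> u \<and> u \<le> v \<and> v \<le> b"
      and pw: "pairwise (\<lambda>(u,v) (u',v'). v \<le> u' \<or> v' \<le> u) I" and len: "(\<Sum>(u,v)\<in>I. v - u) < \<delta>"
    define \<psi> where "\<psi> = (\<lambda>(u::real,v::real). (\<phi> u, \<phi> v))"
    define I1 where "I1 = {i\<in>I. \<phi> (fst i) < \<phi> (snd i)}"
    have I1I: "I1 \<subseteq> I" unfolding I1_def by auto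
    have fin1: "finite I1" using fin I1I finite_subset by blast
    have s1: "(\<Sum>(u,v)\<in>I. norm (x (\<phi> v) - x (\<phi> u))) = (\<Sum>(u,v)\<in>I1. norm (x (\<phi> v) - x (\<phi> u)))"
    proof (rule sum.mono_neutral_right[OF fin I1I], rule ballI)
      fix i assume "i \<in> I - I1"
      moreover obtain u v where "i = (u,v)" by (cases i)
      ultimately have uv: "(u,v) \<in> I" "(u,v) \<notin> I1" by auto
      then have "\<phi> u = \<phi> v" using rI mono[of u v] unfolding I1_def by fastforce
      then show "(case i of (u,v) \<Rightarrow> norm (x (\<phi> v) - x (\<phi> u))) = 0" using \<open>i = (u,v)\<close> by simp
    qed
    have inj: "inj_on \<psi> I1"
    proof (rule inj_onI)
      fix i j assume i: "i \<in> I1" and j: "j \<in> I1" and eq: "\<psi> i = \<psi> j"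
      obtain u1 v1 where ij1: "i = (u1,v1)" by (cases i)
      obtain u2 v2 where ij2: "j = (u2,v2)" by (cases j)
      show "i = j"
      proof (rule ccontr)
        assume "i \<noteq> j"
        then have ne: "(u1,v1) \<noteq> (u2,v2)" using ij1 ij2 by simp
        have m1: "(u1,v1) \<in> I" "(u2,v2) \<in> I" using i j I1I ij1 ij2 by auto
        have "(case (u1,v1) of (u,v) \<Rightarrow> \<lambda>(u',v'). v \<le> u' \<or> v' \<le> u) (u2,v2)"
          using pw m1 ne unfolding pairwise_def by blast
        then have "v1 \<le> u2 \<or> v2 \<le> u1" by simp
        moreover have "\<phi> u1 = \<phi> u2" "\<phi> v1 = \<phi> v2" using eq unfolding \<psi>_def ij1 ij2 by auto
        moreover have "\<phi> u1 < \<phi> v1" "\<phi> u2 < \<phi> v2" using i j unfolding I1_def ij1 ij2 by auto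
        ultimately show False using mono by (metis not_le order_le_less_trans)
      qed
    qed
    have s2: "(\<Sum>(u,v)\<in>I1. norm (x (\<phi> v) - x (\<phi> u))) = (\<Sum>(u,v)\<in>\<psi> ` I1. norm (x v - x u))"
      by (subst sum.reindex[OF inj]) (auto simp: \<psi>_def intro!: sum.cong)
    have len1: "(\<Sum>(u,v)\<in>\<psi> ` I1. v - u) = (\<Sum>(u,v)\<in>I1. \<phi> v - \<phi> u)"
      by (subst sum.reindex[OF inj]) (auto simp: \<psi>_def intro!: sum.cong)
    also have "\<dots> \<le> (\<Sum>(u,v)\<in>I1. v - u)"
    proof (rule sum_mono)
      fix i assume i: "i \<in> I1"
      obtain u v where uv: "i = (u,v)" by (cases i)
      then have "u \<le> v" using i I1I rI by auto
      then show "(case i of (u,v) \<Rightarrow> \<phi> v - \<phi> u) \<le> (case i of (u,v) \<Rightarrow> v - u)"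
        using lip uv by simp
    qed
    also have "\<dots> \<le> (\<Sum>(u,v)\<in>I. v - u)"
      using rI I1I fin by (intro sum_mono2) auto
    finally have len2: "(\<Sum>(u,v)\<in>\<psi> ` I1. v - u) < \<delta>" using len by simp
    have "(\<Sum>(u,v)\<in>\<psi> ` I1. norm (x v - x u)) < e"
    proof (rule H, intro conjI)
      show "finite (\<psi> ` I1)" using fin1 by simp
      show "\<forall>(u,v)\<in>\<psi> ` I1. c \<le> u \<and> u \<le> v \<and> v \<le> d"
      proof (rule ballI)
        fix p assume "p \<in> \<psi> ` I1"
        then obtain u v where p: "p = (\<phi> u, \<phi> v)" and uv: "(u,v) \<in> I" using I1I unfolding \<psi>_def by auto
        then have "a \<le> u" "u \<le> v" "v \<le> b" using rI by auto
        then show "case p of (u,v) \<Rightarrow> c \<le> u \<and> u \<le> v \<and> v \<le> d"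
          using rng[of u] rng[of v] mono[of u v] p by auto
      qed
      show "pairwise (\<lambda>(u,v) (u',v'). v \<le> u' \<or> v' \<le> u) (\<psi> ` I1)"
        unfolding pairwise_def
      proof (intro ballI impI)
        fix p q assume p: "p \<in> \<psi> ` I1" and q: "q \<in> \<psi> ` I1" and pq: "p \<noteq> q"
        obtain u1 v1 where i: "(u1,v1) \<in> I1" and pe: "p = (\<phi> u1, \<phi> v1)" using p unfolding \<psi>_def by auto
        obtain u2 v2 where j: "(u2,v2) \<in> I1" and qe: "q = (\<phi> u2, \<phi> v2)" using q unfolding \<psi>_def by auto
        have ne: "(u1,v1) \<noteq> (u2,v2)" using pq pe qe by auto
        have m1: "(u1,v1) \<in> I" "(u2,v2) \<in> I" using i j I1I by auto
        have "(case (u1,v1) of (u,v) \<Rightarrow> \<lambda>(u',v'). v \<le> u' \<or> v' \<le> u) (u2,v2)"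
          using pw m1 ne unfolding pairwise_def by blast
        then have "v1 \<le> u2 \<or> v2 \<le> u1" by simp
        then show "(case p of (u,v) \<Rightarrow> \<lambda>(u',v'). v \<le> u' \<or> v' \<le> u) q"
          using mono pe qe by auto
      qed
      show "(\<Sum>(u,v)\<in>\<psi> ` I1. v - u) < \<delta>" by (rule len2)
    qed
    then show "(\<Sum>(u,v)\<in>I. norm (x (\<phi> v) - x (\<phi> u))) < e" using s1 s2 by simp
  qed
qed



lemma concat_pt:
  fixes x z :: "real \<Rightarrow> 'a::real_normed_vector"
  assumes eq: "x t = z t" and uv: "u \<le> v"
  shows "norm ((if v \<le> t then x v else z v) - (if u \<le> t then x u else z u))
     \<le> norm (x (min v t) - x (min u t)) + norm (z (max v t) - z (max u t))"
proof (cases "v \<le> t")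
  case True
  then show ?thesis using uv by (simp add: max_def)
next
  case False
  note vt = this
  show ?thesis
  proof (cases "u \<le> t")
    case True
    have "z v - x u = (x t - x u) + (z v - z t)" using eq by simp
    then have "norm (z v - x u) \<le> norm (x t - x u) + norm (z v - z t)"
      by (metis norm_triangle_ineq)
    then show ?thesis using True vt by (simp add: min_def max_def)
  next
    case False
    then show ?thesis using vt uv by (simp add: min_def max_def)
  qed
qed

lemma ac_concat:
  assumes x: "abs_cont_on a t x" and z: "abs_cont_on t b z" and eq: "x t = z t" and at: "a \<le> t" and tb: "t \<le> b"
  shows "abs_cont_on a b (\<lambda>s. if s \<le> t then x s else z s)"
  unfolding abs_cont_on_def
proof (intro allI impI)
  fix e :: real assume e: "e > 0"
  then have e2: "e/2 > 0" by simp
  obtain d1 where d1: "d1 > 0" and H1: "\<And>I::(real\<times>real) set. finite I \<Longrightarrow> (\<forall>(u,v)\<in>I. a \<le> u \<and> u \<le> v \<and> v \<le> b) \<Longrightarrow>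
     pairwise (\<lambda>(u,v) (u',v'). v \<le> u' \<or> v' \<le> u) I \<Longrightarrow> (\<Sum>(u,v)\<in>I. v - u) < d1 \<Longrightarrow>
     (\<Sum>(u,v)\<in>I. norm (x (min v t) - x (min u t))) < e/2"
    by (rule ac_compose_mono[OF x, of "\<lambda>s. min s t" a b "e/2"]) (use e at in auto)
  obtain d2 where d2: "d2 > 0" and H2: "\<And>I::(real\<times>real) set. finite I \<Longrightarrow> (\<forall>(u,v)\<in>I. a \<le> u \<and> u \<le> v \<and> v \<le> b) \<Longrightarrow>
     pairwise (\<lambda>(u,v) (u',v'). v \<le> u' \<or> v' \<le> u) I \<Longrightarrow> (\<Sum>(u,v)\<in>I. v - u) < d2 \<Longrightarrow>
     (\<Sum>(u,v)\<in>I. norm (z (max v t) - z (max u t))) < e/2"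
    by (rule ac_compose_mono[OF z, of "\<lambda>s. max s t" a b "e/2"]) (use e tb in auto)
  show "\<exists>d>0. \<forall>I::(real\<times>real) set. finite I \<and> (\<forall>(u,v)\<in>I. a \<le> u \<and> u \<le> v \<and> v \<le> b)
        \<and> pairwise (\<lambda>(u,v) (u',v'). v \<le> u' \<or> v' \<le> u) I
        \<and> (\<Sum>(u,v)\<in>I. v - u) < d
        \<longrightarrow> (\<Sum>(u,v)\<in>I. norm ((if v \<le> t then x v else z v) - (if u \<le> t then x u else z u))) < e"
  proof (intro exI[of _ "min d1 d2"] conjI allI impI)
    show "min d1 d2 > 0" using d1 d2 by simp
    fix I :: "(real\<times>real) set"
    assume I: "finite I \<and> (\<forall>(u,v)\<in>I. a \<le> u \<and> u \<le> v \<and> v \<le> b)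
        \<and> pairwise (\<lambda>(u,v) (u',v'). v \<le> u' \<or> v' \<le> u) I
        \<and> (\<Sum>(u,v)\<in>I. v - u) < min d1 d2"
    have "(\<Sum>(u,v)\<in>I. norm ((if v \<le> t then x v else z v) - (if u \<le> t then x u else z u)))
        \<le> (\<Sum>(u,v)\<in>I. norm (x (min v t) - x (min u t)) + norm (z (max v t) - z (max u t)))"
    proof (rule sum_mono)
      fix i assume i: "i \<in> I"
      obtain u v where uv: "i = (u,v)" by (cases i)
      then have "u \<le> v" using i I by auto
      then show "(case i of (u,v) \<Rightarrow> norm ((if v \<le> t then x v else z v) - (if u \<le> t then x u else z u)))
          \<le> (case i of (u,v) \<Rightarrow> norm (x (min v t) - x (min u t)) + norm (z (max v t) - z (max u t)))"
        using concat_pt[of x t z u v, OF eq] uv by simp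
    qed
    also have "\<dots> = (\<Sum>(u,v)\<in>I. norm (x (min v t) - x (min u t))) + (\<Sum>(u,v)\<in>I. norm (z (max v t) - z (max u t)))"
      by (simp add: split_def sum.distrib)
    also have "\<dots> < e/2 + e/2"
      using I by (intro add_strict_mono H1 H2) auto
    finally show "(\<Sum>(u,v)\<in>I. norm ((if v \<le> t then x v else z v) - (if u \<le> t then x u else z u))) < e" by simp
  qed
qed



lemma lagr_lower: "ereal (- H x 0) \<le> lagr H x v"
  unfolding lagr_def by (rule SUP_upper2[of 0]) auto

lemma negpart_finite:
  fixes H :: "'a::euclidean_space \<Rightarrow> 'a \<Rightarrow> real" and x D :: "real \<Rightarrow> 'a"
  assumes cont: "continuous_on {a..b} x" and ab: "a \<le> b"
    and Hb: "\<And>y. \<bar>H y 0\<bar> \<le> K + M * norm y" and M: "M \<ge> 0"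
  shows "(\<integral>\<^sup>+ s\<in>{a..b}. e2ennreal (- lagr H (x s) (D s)) \<partial>lebesgue) \<noteq> top"
proof -
  have "compact (x ` {a..b})" by (rule compact_continuous_image[OF cont]) (rule compact_Icc)
  then obtain B where B: "\<And>s. s \<in> {a..b} \<Longrightarrow> norm (x s) \<le> B"
    using compact_imp_bounded bounded_iff by (metis imageI)
  define C where "C = K + M * B"
  have le: "e2ennreal (- lagr H (x s) (D s)) \<le> ennreal C" if s: "s \<in> {a..b}" for s
  proof -
    have "- lagr H (x s) (D s) \<le> ereal (H (x s) 0)"
      using lagr_lower[of H "x s" "D s"] by (subst ereal_uminus_le_reorder) simp
    also have "\<dots> \<le> ereal C"
    proof -
      have "H (x s) 0 \<le> K + M * norm (x s)" using Hb[of "x s"] by simp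
      also have "\<dots> \<le> K + M * B" using B[OF s] M by (simp add: mult_left_mono)
      finally show ?thesis by (simp add: C_def)
    qed
    finally show ?thesis using e2ennreal_mono by fastforce
  qed
  have "(\<integral>\<^sup>+ s\<in>{a..b}. e2ennreal (- lagr H (x s) (D s)) \<partial>lebesgue) \<le> (\<integral>\<^sup>+ s. ennreal C * indicator {a..b} s \<partial>lebesgue)"
    by (intro nn_integral_mono) (auto simp: indicator_def le)
  also have "\<dots> = ennreal C * emeasure lebesgue {a..b}"
    by (rule nn_integral_cmult_indicator) simp
  also have "\<dots> = ennreal C * ennreal (b - a)" using ab by simp
  also have "\<dots> < top" by (simp add: ennreal_mult_less_top)
  finally show ?thesis by simp
qed

lemma action_split:
  fixes H :: "'a::euclidean_space \<Rightarrow> 'a \<Rightarrow> real"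
  assumes ac: "abs_cont_on a b x" and at: "a \<le> t" and tb: "t \<le> b"
    and Hb: "\<And>y. \<bar>H y 0\<bar> \<le> K + M * norm y" and M: "M \<ge> 0"
  shows "action H a b x = action H a t x + action H t b x"
    and "action H a b x \<noteq> -\<infinity>"
proof -
  have "a \<le> b" using at tb by simp
  note nf = negpart_finite[of a b x H K M "\<lambda>s. vector_derivative x (at s)", OF ac_continuous[OF ac] this Hb M]
  show "action H a b x = action H a t x + action H t b x" "action H a b x \<noteq> -\<infinity>"
    unfolding action_def using eintegral_split[OF at tb nf] by auto
qed

lemma action_nonminf:
  fixes H :: "'a::euclidean_space \<Rightarrow> 'a \<Rightarrow> real"
  assumes ac: "abs_cont_on a b x" and ab: "a \<le> b"
    and Hb: "\<And>y. \<bar>H y 0\<bar> \<le> K + M * norm y" and M: "M \<ge> 0"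
  shows "action H a b x \<noteq> -\<infinity>"
  using action_split(2)[of a b x a H K M, OF ac order_refl ab Hb M] .

lemma valU_0: "valU H g0 0 y = ereal (g0 y)"
proof -
  let ?S = "{x. abs_cont_on 0 0 x \<and> x 0 = y}"
  have "valU H g0 0 y = (INF x\<in>?S. ereal (g0 y))"
    unfolding valU_def by (rule INF_cong) (auto simp: action_def eintegral_same)
  moreover have "(\<lambda>_. y) \<in> ?S" by (simp add: ac_const)
  then have "?S \<noteq> {}" by blast
  ultimately show ?thesis by simp
qed

lemma valW_T: "valW H gT T T y = ereal (gT y)"
proof -
  let ?S = "{x. abs_cont_on T T x \<and> x T = y}"
  have "valW H gT T T y = (SUP x\<in>?S. ereal (gT y))"
    unfolding valW_def by (rule SUP_cong) (auto simp: action_def eintegral_same)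
  moreover have "(\<lambda>_. y) \<in> ?S" by (simp add: ac_const)
  then have "?S \<noteq> {}" by blast
  ultimately show ?thesis by simp
qed

lemma ereal_aux1:
  "ereal g \<le> ereal c + (A + B) \<Longrightarrow> A \<noteq> -\<infinity> \<Longrightarrow> B \<noteq> -\<infinity> \<Longrightarrow> ereal g - B \<le> ereal c + A"
  by (cases A; cases B) auto

lemma ereal_aux2:
  "ereal g = ereal c + (A + B) \<Longrightarrow> A \<noteq> -\<infinity> \<Longrightarrow> B \<noteq> -\<infinity> \<Longrightarrow> ereal c + A \<le> ereal g - B"
  by (cases A; cases B) auto

lemma vd_local:
  assumes "open S" "s \<in> S" "\<And>r. r \<in> S \<Longrightarrow> f r = g r"
  shows "vector_derivative f (at s) = vector_derivative g (at s)"
proof (rule vector_derivative_cong_eq)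
  show "\<forall>\<^sub>F r in nhds s. r \<in> UNIV \<longrightarrow> f r = g r"
    using eventually_nhds_in_open[OF assms(1,2)] by eventually_elim (use assms(3) in auto)
qed auto



theorem proposition5p6:
  fixes H :: "'a::euclidean_space \<Rightarrow> 'a \<Rightarrow> real"
    and g0 gT :: "'a \<Rightarrow> real"
    and T M :: real
    and xbar :: "real \<Rightarrow> 'a"
  assumes T_pos: "T > 0"
    and H_convex: "\<And>x. convex_on UNIV (H x)"
    and M_nonneg: "M \<ge> 0"
    and H_lip_p: "\<And>x p q. \<bar>H x p - H x q\<bar> \<le> M * (1 + norm x) * norm (p - q)"
    and H_lip_x: "\<And>x y p. \<bar>H x p - H y p\<bar> \<le> M * (1 + norm p) * norm (x - y)"
    and g0_cont: "continuous_on UNIV g0"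
    and gT_cont: "continuous_on UNIV gT"
    and xbar_ac: "abs_cont_on 0 T xbar"
    and xbar_opt: "valU H g0 T (xbar T) = valU H g0 0 (xbar 0) + action H 0 T xbar"
    and UW_T: "\<And>y. valU H g0 T y = valW H gT T T y"
  shows "valW H gT T 0 (xbar 0) = valW H gT T T (xbar T) - action H 0 T xbar
     \<and> (\<forall>t\<in>{0..T}. valU H g0 t (xbar t) = valW H gT T t (xbar t))"
proof -
  have Hb: "\<bar>H y 0\<bar> \<le> \<bar>H 0 0\<bar> + M * norm y" for y
    using H_lip_x[of y 0 0] by simp
  have UT: "valU H g0 T y = ereal (gT y)" for y using UW_T valW_T by simp
  have Uupper: "valU H g0 t (x t) \<le> ereal (g0 (x 0)) + action H 0 t x" if "abs_cont_on 0 t x" for t x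
    unfolding valU_def by (rule INF_lower) (use that in auto)
  have Wlower: "ereal (gT (x T)) - action H t T x \<le> valW H gT T t (x t)" if "abs_cont_on t T x" for t x
    unfolding valW_def by (rule SUP_upper) (use that in auto)
  have WleU: "valW H gT T t y \<le> valU H g0 t y" if t: "t \<in> {0..T}" for t y
    unfolding valW_def
  proof (rule SUP_least)
    fix z assume "z \<in> {x. abs_cont_on t T x \<and> x t = y}"
    then have z: "abs_cont_on t T z" "z t = y" by auto
    show "ereal (gT (z T)) - action H t T z \<le> valU H g0 t y"
      unfolding valU_def
    proof (rule INF_greatest)
      fix x assume "x \<in> {x. abs_cont_on 0 t x \<and> x t = y}"
      then have x: "abs_cont_on 0 t x" "x t = y" by auto
      define w where "w = (\<lambda>s. if s \<le> t then x s else z s)"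
      have wac: "abs_cont_on 0 T w"
        unfolding w_def using ac_concat[OF x(1) z(1)] x(2) z(2) t by auto
      have wT: "w T = z T" using t x(2) z(2) by (auto simp: w_def)
      have w0: "w 0 = x 0" using t by (auto simp: w_def)
      have sp: "action H 0 T w = action H 0 t w + action H t T w"
        using action_split(1)[of 0 T w t H "\<bar>H 0 0\<bar>" M, OF wac _ _ Hb M_nonneg] t by auto
      have a1: "action H 0 t w = action H 0 t x"
        unfolding action_def
      proof (rule eintegral_cong)
        fix s assume s: "0 < s" "s < t"
        have "vector_derivative w (at s) = vector_derivative x (at s)"
          by (rule vd_local[of "{..<t}"]) (use s in \<open>auto simp: w_def\<close>)
        moreover have "w s = x s" using s by (simp add: w_def)
        ultimately show "lagr H (w s) (vector_derivative w (at s)) = lagr H (x s) (vector_derivative x (at s))"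
          by simp
      qed
      have a2: "action H t T w = action H t T z"
        unfolding action_def
      proof (rule eintegral_cong)
        fix s assume s: "t < s" "s < T"
        have "vector_derivative w (at s) = vector_derivative z (at s)"
          by (rule vd_local[of "{t<..}"]) (use s in \<open>auto simp: w_def\<close>)
        moreover have "w s = z s" using s by (simp add: w_def)
        ultimately show "lagr H (w s) (vector_derivative w (at s)) = lagr H (z s) (vector_derivative z (at s))"
          by simp
      qed
      have "ereal (gT (z T)) \<le> ereal (g0 (x 0)) + (action H 0 t x + action H t T z)"
        using Uupper[OF wac] UT[of "w T"] wT w0 sp a1 a2 by simp
      moreover have "action H 0 t x \<noteq> -\<infinity>" using action_nonminf[of 0 t x H "\<bar>H 0 0\<bar>" M, OF x(1) _ Hb M_nonneg] t by auto
      moreover have "action H t T z \<noteq> -\<infinity>" using action_nonminf[of t T z H "\<bar>H 0 0\<bar>" M, OF z(1) _ Hb M_nonneg] t by auto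
      ultimately show "ereal (gT (z T)) - action H t T z \<le> ereal (g0 (x 0)) + action H 0 t x"
        by (rule ereal_aux1)
    qed
  qed
  have opt: "ereal (gT (xbar T)) = ereal (g0 (xbar 0)) + action H 0 T xbar"
    using xbar_opt unfolding UT valU_0 .
  have Ab_fin: "action H 0 T xbar \<noteq> -\<infinity>"
    using action_nonminf[of 0 T xbar H "\<bar>H 0 0\<bar>" M, OF xbar_ac _ Hb M_nonneg] T_pos by auto
  have Ab_fin2: "action H 0 T xbar \<noteq> \<infinity>" using opt by auto
  obtain ab where ab: "action H 0 T xbar = ereal ab" using Ab_fin Ab_fin2 by (cases "action H 0 T xbar") auto
  have claimA: "valW H gT T 0 (xbar 0) = valW H gT T T (xbar T) - action H 0 T xbar"
  proof (rule antisym)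
    have "valW H gT T 0 (xbar 0) \<le> valU H g0 0 (xbar 0)" using WleU[of 0] T_pos by simp
    also have "\<dots> = ereal (gT (xbar T)) - action H 0 T xbar"
      using opt ab valU_0 by simp
    finally show "valW H gT T 0 (xbar 0) \<le> valW H gT T T (xbar T) - action H 0 T xbar"
      unfolding valW_T .
    show "valW H gT T T (xbar T) - action H 0 T xbar \<le> valW H gT T 0 (xbar 0)"
      using Wlower[OF xbar_ac] unfolding valW_T by simp
  qed
  have claimB: "valU H g0 t (xbar t) = valW H gT T t (xbar t)" if t: "t \<in> {0..T}" for t
  proof (rule antisym)
    show "valW H gT T t (xbar t) \<le> valU H g0 t (xbar t)" by (rule WleU[OF t])
    have ac1: "abs_cont_on 0 t xbar" using ac_restrict[OF xbar_ac] t by auto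
    have ac2: "abs_cont_on t T xbar" using ac_restrict[OF xbar_ac] t by auto
    have sp: "action H 0 T xbar = action H 0 t xbar + action H t T xbar"
      using action_split(1)[of 0 T xbar t H "\<bar>H 0 0\<bar>" M, OF xbar_ac _ _ Hb M_nonneg] t by auto
    have f1: "action H 0 t xbar \<noteq> -\<infinity>" using action_nonminf[of 0 t xbar H "\<bar>H 0 0\<bar>" M, OF ac1 _ Hb M_nonneg] t by auto
    have f2: "action H t T xbar \<noteq> -\<infinity>" using action_nonminf[of t T xbar H "\<bar>H 0 0\<bar>" M, OF ac2 _ Hb M_nonneg] t by auto
    have "valU H g0 t (xbar t) \<le> ereal (g0 (xbar 0)) + action H 0 t xbar" by (rule Uupper[OF ac1])
    also have "\<dots> \<le> ereal (gT (xbar T)) - action H t T xbar"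
      using ereal_aux2[OF _ f1 f2] opt sp by simp
    also have "\<dots> \<le> valW H gT T t (xbar t)" by (rule Wlower[OF ac2])
    finally show "valU H g0 t (xbar t) \<le> valW H gT T t (xbar t)" .
  qed
  show ?thesis using claimA claimB by blast
qed

end
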